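(* Let $g\in F$. Then there exists $m\in\mathbb{N}$ such that for every $t\in(0,2^{-m})\cap S_0$ one has $\omega(t)\equiv\omega(g(t))\pmod 3$. Here $$S_0=\{t\in(0,1)\cap\mathbb{Z}[1/2]:\omega(t)=0,\ |t|\text{ even}\}.$$
   Context: Thompson's group $F$ is the group of piecewise linear homeomorphisms of $[0,1]$ that are differentiable except at finitely many dyadic rationals with slopes in $2^{\mathbb{Z}}$; $g(t)$ denotes the image of $t$ under $g$. The weight $\omega$ on finite binary words is defined by triples with - $(L,R,B)(\emptyset)=(0,1,2)$, - $(L,R,B)(z0)=(L(z),B(z),R(z))$, - $(L,R,B)(z1)=(B(z),R(z),L(z))$, and $\omega(z)=L(z)\in\mathbb{Z}_3$. This is the color of the region left of vertex $z$ (path word, $0$ = left, $1$ = right) in the proper $3$-coloring of the complement of the infinite rooted planar binary tree with the regions left of, right of and below the root colored $0,1,2$. For a dyadic rational $t\in(0,1)$, write $t=.a_1\cdots a_n$ for its terminating binary expansion with $a_n=1$, and set $|t|=n$ and $\omega(t)=\omega(a_1\cdots a_n)$. *)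

theory Defs
  imports Complex_Main
begin

definition dyadic :: "real \<Rightarrow> bool" where
  "dyadic t \<longleftrightarrow> (\<exists>(a::int) (n::nat). t = of_int a / 2 ^ n)"

definition thompsonF :: "(real \<Rightarrow> real) set" where
  "thompsonF = {g. bij_betw g {0..1} {0..1} \<and>
     (\<exists>xs :: real list. length xs \<ge> 2 \<and> hd xs = 0 \<and> last xs = 1 \<and> sorted_wrt (<) xs \<and>
        (\<forall>x\<in>set xs. dyadic x) \<and>
        (\<forall>i. Suc i < length xs \<longrightarrow>
           (\<exists>(k::int) (b::real). \<forall>t\<in>{xs!i .. xs!Suc i}. g t = 2 powi k * t + b)))}"

text \<open>Colour weight on finite binary words (False = 0 = left, True = 1 = right).\<close>
fun col_step :: "nat \<times> nat \<times> nat \<Rightarrow> bool \<Rightarrow> nat \<times> nat \<times> nat" where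
  "col_step (L, R, B) False = (L, B, R)"
| "col_step (L, R, B) True = (B, R, L)"

definition LRB :: "bool list \<Rightarrow> nat \<times> nat \<times> nat" where
  "LRB z = foldl col_step (0, 1, 2) z"

definition omega_word :: "bool list \<Rightarrow> nat" where
  "omega_word z = fst (LRB z)"

definition dlen :: "real \<Rightarrow> nat" where
  "dlen t = (LEAST n. \<exists>a::int. t = of_int a / 2 ^ n)"

definition bin_word :: "real \<Rightarrow> bool list" where
  "bin_word t = map (\<lambda>i. odd \<lfloor>t * 2 ^ Suc i\<rfloor>) [0..<dlen t]"

definition omega :: "real \<Rightarrow> nat" where
  "omega t = omega_word (bin_word t)"

definition S0 :: "real set" where
  "S0 = {t. 0 < t \<and> t < 1 \<and> dyadic t \<and> omega t = 0 \<and> even (dlen t)}"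

end

theory Submission
  imports Defs
begin

definition sw :: "nat \<Rightarrow> nat" where
  "sw x = (if x = 1 then 2 else if x = 2 then 1 else x)"

lemma fold_perm:
  "foldl col_step (f a, f b, f c) w =
     (case foldl col_step (a, b, c) w of (x, y, z) \<Rightarrow> (f x, f y, f z))"
proof (induction w arbitrary: a b c)
  case Nil then show ?case by simp
next
  case (Cons x w)
  show ?case
  proof (cases x)
    case True
    have "foldl col_step (f a, f b, f c) (x # w) = foldl col_step (f c, f b, f a) w"
      using True by simp
    also have "\<dots> = (case foldl col_step (c, b, a) w of (x, y, z) \<Rightarrow> (f x, f y, f z))"
      by (rule Cons.IH)
    finally show ?thesis using True by simp
  next
    case False
    have "foldl col_step (f a, f b, f c) (x # w) = foldl col_step (f a, f c, f b) w"
      using False by simp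
    also have "\<dots> = (case foldl col_step (a, c, b) w of (x, y, z) \<Rightarrow> (f x, f y, f z))"
      by (rule Cons.IH)
    finally show ?thesis using False by simp
  qed
qed

lemma omega_word_False: "omega_word (False # w) = sw (omega_word w)"
proof -
  have "omega_word (False # w) = fst (foldl col_step (sw 0, sw 1, sw 2) w)"
    unfolding omega_word_def LRB_def by (simp add: sw_def)
  also have "\<dots> = sw (omega_word w)"
    unfolding fold_perm omega_word_def LRB_def by (simp split: prod.splits)
  finally show ?thesis .
qed

lemma sw0: "sw x = 0 \<longleftrightarrow> x = 0"
  by (simp add: sw_def)

lemma dlen_double:
  assumes "dyadic s" "0 < s" "s < 1"
  shows "dlen s = Suc (dlen (2 * s))"
proof -
  obtain a :: int and n :: nat where an: "s = of_int a / 2 ^ n"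
    using assms(1) unfolding dyadic_def by blast
  have np: "\<not> (\<exists>a::int. s = of_int a / 2 ^ 0)"
  proof
    assume "\<exists>a::int. s = of_int a / 2 ^ 0"
    then obtain c :: int where "s = of_int c" by auto
    with assms have "0 < c" "c < 1" by auto
    then show False by simp
  qed
  have eq: "(\<lambda>m. \<exists>a::int. s = of_int a / 2 ^ Suc m) = (\<lambda>m. \<exists>a::int. 2 * s = of_int a / 2 ^ m)"
    by (rule ext) (auto simp: field_simps)
  have "dlen s = Suc (LEAST m. \<exists>a::int. s = of_int a / 2 ^ Suc m)"
    unfolding dlen_def by (rule Least_Suc[of _ n]) (use an np in auto)
  then show ?thesis unfolding eq dlen_def .
qed

lemma bin_word_double:
  assumes "dyadic s" "0 < s" "s < 1/2"
  shows "bin_word s = False # bin_word (2 * s)"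
proof -
  have d: "dlen s = Suc (dlen (2 * s))" using assms by (intro dlen_double) auto
  have f: "\<lfloor>s * 2\<rfloor> = 0" using assms by (simp add: floor_eq_iff)
  have u: "[0..<Suc (dlen (2*s))] = 0 # map Suc [0..<dlen (2*s)]"
    by (simp add: map_Suc_upt upt_conv_Cons)
  have "bin_word s = False # map (\<lambda>i. odd \<lfloor>s * 2 ^ Suc (Suc i)\<rfloor>) [0..<dlen (2*s)]"
    unfolding bin_word_def d u using f by simp
  also have "\<dots> = False # bin_word (2 * s)"
    unfolding bin_word_def by (simp add: mult.assoc mult.commute mult.left_commute)
  finally show ?thesis .
qed

lemma omega_double:
  assumes "dyadic s" "0 < s" "s < 1/2"
  shows "omega (2 * s) = 0 \<longleftrightarrow> omega s = 0"
  unfolding omega_def bin_word_double[OF assms] omega_word_False sw0 ..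

lemma dyadic_double: "dyadic s \<Longrightarrow> dyadic (2 * s)"
  unfolding dyadic_def
proof (elim exE)
  fix a :: int and n :: nat assume "s = of_int a / 2 ^ n"
  then have "2 * s = of_int (2 * a) / 2 ^ n" by simp
  then show "\<exists>(a::int) n. 2 * s = of_int a / 2 ^ n" by blast
qed

lemma dyadic_div: "dyadic s \<Longrightarrow> dyadic (s / 2 ^ k)"
  unfolding dyadic_def
proof (elim exE)
  fix a :: int and n :: nat assume "s = of_int a / 2 ^ n"
  then have "s / 2 ^ k = of_int a / 2 ^ (n + k)" by (simp add: power_add)
  then show "\<exists>(a::int) n. s / 2 ^ k = of_int a / 2 ^ n" by blast
qed

lemma omega_pow:
  "dyadic s \<Longrightarrow> 0 < s \<Longrightarrow> 2 ^ n * s < 1 \<Longrightarrow> (omega (2 ^ n * s) = 0 \<longleftrightarrow> omega s = 0)"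
proof (induction n arbitrary: s)
  case 0 then show ?case by simp
next
  case (Suc n)
  have h: "2 ^ Suc n * s = 2 ^ n * (2 * s)" by simp
  have "omega (2 ^ n * (2 * s)) = 0 \<longleftrightarrow> omega (2 * s) = 0"
    using Suc.prems by (intro Suc.IH) (auto simp: dyadic_double)
  also have "\<dots> \<longleftrightarrow> omega s = 0"
  proof (rule omega_double)
    have "2 * s \<le> 2 ^ Suc n * s" using Suc.prems
      by (intro mult_right_mono) (auto simp: one_le_power)
    then show "s < 1/2" using Suc.prems by linarith
  qed (use Suc.prems in auto)
  finally show ?case unfolding h .
qed


lemma pieces_pos:
  fixes g :: "real \<Rightarrow> real"
  assumes so: "sorted_wrt (<) xs" and h0: "xs ! 0 = 0"
    and P: "\<forall>i. Suc i < length xs \<longrightarrow>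
           (\<exists>(k::int) (b::real). \<forall>t\<in>{xs!i .. xs!Suc i}. g t = 2 powi k * t + b)"
  shows "Suc i < length xs \<Longrightarrow> u \<in> {xs!i .. xs!Suc i} \<Longrightarrow> 0 < u \<Longrightarrow> g 0 < g u"
proof (induction i arbitrary: u)
  case 0
  obtain k b where kb: "\<forall>t\<in>{xs!0 .. xs!Suc 0}. g t = 2 powi k * t + b"
    using P 0 by blast
  have "xs!0 < xs!Suc 0" using so 0 by (simp add: sorted_wrt_iff_nth_less)
  then have "g 0 = b" using kb h0 by force
  moreover have "g u = 2 powi k * u + b" using kb 0 by blast
  moreover have "0 < (2::real) powi k * u" using 0 by simp
  ultimately show ?case by simp
next
  case (Suc i)
  define v where "v = xs ! Suc i"
  have lt1: "xs!i < v" "xs ! 0 < v" using so Suc.prems unfolding v_def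
    by (auto simp: sorted_wrt_iff_nth_less)
  have gv: "g 0 < g v"
    using Suc.IH[of v] lt1 Suc.prems h0 unfolding v_def by auto
  obtain k b where kb: "\<forall>t\<in>{xs!Suc i .. xs!Suc (Suc i)}. g t = 2 powi k * t + b"
    using P Suc.prems by blast
  have "v \<le> xs ! Suc (Suc i)" using Suc.prems unfolding v_def by auto
  then have "g v = 2 powi k * v + b" using kb unfolding v_def by auto
  moreover have "g u = 2 powi k * u + b" using kb Suc.prems by blast
  moreover have "2 powi k * v \<le> (2::real) powi k * u"
    using Suc.prems unfolding v_def by (intro mult_left_mono) auto
  ultimately show ?case using gv by linarith
qed

lemma cover:
  fixes xs :: "real list"
  assumes "length xs \<ge> 2" "xs ! 0 = 0" "xs ! (length xs - 1) = 1" "0 < u" "u \<le> 1"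
  shows "\<exists>i. Suc i < length xs \<and> xs!i \<le> u \<and> u \<le> xs!Suc i"
proof -
  define j where "j = (LEAST j. u \<le> xs ! j)"
  have ex: "u \<le> xs ! (length xs - 1)" using assms by simp
  have uj: "u \<le> xs ! j" unfolding j_def by (rule LeastI[of "\<lambda>j. u \<le> xs ! j", OF ex])
  have jle: "j \<le> length xs - 1" unfolding j_def by (rule Least_le[of "\<lambda>j. u \<le> xs ! j", OF ex])
  show ?thesis
  proof (cases j)
    case 0
    then show ?thesis using uj assms by simp
  next
    case (Suc i)
    have "\<not> u \<le> xs ! i" unfolding j_def
      using not_less_Least[of i "\<lambda>j. u \<le> xs ! j"] Suc j_def by simp
    then show ?thesis using Suc uj jle assms by (intro exI[of _ i]) auto
  qed
qed

theorem lemma2p12: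
  assumes "g \<in> thompsonF"
  shows "\<exists>m::nat. \<forall>t\<in>S0. t < 1 / 2 ^ m \<longrightarrow> omega t = omega (g t)"
proof -
  obtain xs :: "real list" where bij: "bij_betw g {0..1} {0..1}" and
    len: "length xs \<ge> 2" and hd: "hd xs = 0" and la: "last xs = 1" and so: "sorted_wrt (<) xs"
    and P: "\<forall>i. Suc i < length xs \<longrightarrow>
           (\<exists>(k::int) (b::real). \<forall>t\<in>{xs!i .. xs!Suc i}. g t = 2 powi k * t + b)"
    using assms unfolding thompsonF_def by blast
  have ne: "xs \<noteq> []" using len by auto
  have h0: "xs ! 0 = 0" using hd ne by (simp add: hd_conv_nth)
  have l1: "xs ! (length xs - 1) = 1" using la ne by (simp add: last_conv_nth)
  have g0: "g 0 = 0"
  proof -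
    have "0 \<in> g ` {0..1}" using bij by (simp add: bij_betw_def)
    then obtain u where u: "u \<in> {0..1}" "g u = 0" by auto
    have g0r: "g 0 \<in> {0..1}" using bij by (auto simp: bij_betw_def)
    show ?thesis
    proof (cases "u = 0")
      case True then show ?thesis using u by simp
    next
      case False
      then have "0 < u" using u by auto
      obtain i where i: "Suc i < length xs" "xs!i \<le> u" "u \<le> xs!Suc i"
        using cover[OF len h0 l1 \<open>0 < u\<close>] u(1) by auto
      have "g 0 < g u" using pieces_pos[OF so h0 P i(1)] i \<open>0 < u\<close> by auto
      then show ?thesis using u g0r by auto
    qed
  qed
  obtain k b where kb: "\<forall>t\<in>{xs!0 .. xs!Suc 0}. g t = 2 powi k * t + b"
    using P len by (metis One_nat_def Suc_1 Suc_le_lessD)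
  have x1: "0 < xs ! 1"
  proof -
    have "\<forall>i j. i < j \<longrightarrow> j < length xs \<longrightarrow> xs!i < xs!j" using so by (simp add: sorted_wrt_iff_nth_less)
    then have "xs!0 < xs!1" using len by auto
    then show ?thesis using h0 by simp
  qed
  have "b = 0" using kb g0 h0 x1 by force
  with kb h0 have gt: "\<And>t. 0 \<le> t \<Longrightarrow> t \<le> xs ! 1 \<Longrightarrow> g t = 2 powi k * t" by auto
  obtain m1 where m1: "(1/2::real) ^ m1 < xs ! 1"
    using real_arch_pow_inv[OF x1, of "1/2"] by auto
  show ?thesis
  proof (intro exI[of _ "m1 + nat k"] ballI impI)
    fix t assume tS: "t \<in> S0" and tl: "t < 1 / 2 ^ (m1 + nat k)"
    have t: "0 < t" "t < 1" "dyadic t" "omega t = 0" using tS by (auto simp: S0_def)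
    have "(1::real) / 2 ^ (m1 + nat k) \<le> 1 / 2 ^ m1"
      by (intro divide_left_mono power_increasing) auto
    then have "t < xs ! 1" using tl m1 by (simp add: power_one_over)
    then have gtt: "g t = 2 powi k * t" using gt t by auto
    have "omega (g t) = 0"
    proof (cases "k \<ge> 0")
      case True
      then have e: "(2::real) powi k = 2 ^ nat k"
        by (metis power_int_of_nat int_nat_eq)
      have "(1::real) / 2 ^ (m1 + nat k) \<le> 1 / 2 ^ nat k"
        by (intro divide_left_mono power_increasing) auto
      then have "t < 1 / 2 ^ nat k" using tl by simp
      then have "2 ^ nat k * t < 1" by (simp add: field_simps)
      then show ?thesis using omega_pow[OF t(3) t(1)] t gtt e by simp
    next
      case False
      define n where "n = nat (- k)"
      have kn: "k = - int n" using False n_def by simp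
      have e: "(2::real) powi k = 1 / 2 ^ n"
        unfolding kn by (simp add: power_int_minus power_int_of_nat field_simps)
      define s where "s = t / 2 ^ n"
      have s: "dyadic s" "0 < s" "2 ^ n * s = t"
        using t dyadic_div unfolding s_def by auto
      have "g t = s" using gtt e unfolding s_def by simp
      have "omega (2 ^ n * s) = 0 \<longleftrightarrow> omega s = 0"
        by (rule omega_pow) (use s t in auto)
      then show ?thesis using \<open>g t = s\<close> s(3) t by simp
    qed
    then show "omega t = omega (g t)" using t by simp
  qed
qed

end
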